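(* Let $K\ge2$ and let $(\mathbf{H},D,\mathbf{Z})$ follow the replication csmGmm (r-csmGmm) described in the context. Let $\mathcal{H}^{rep}_a=\{(1,\dots,1)^T,(-1,\dots,-1)^T\}\subset\{-1,0,1\}^K$ and $\mathcal{H}^{rep}_0=\{-1,0,1\}^K\setminus\mathcal{H}^{rep}_a$, and define $$lfdr(\mathbf{z})=\Pr(\mathbf{H}\in\mathcal{H}^{rep}_0\mid\mathbf{Z}=\mathbf{z})=\frac{\sum_{l:\mathbf{h}^l\in\mathcal{H}^{rep}_0}\sum_{m=1}^{M_{b_l}}\pi_{b_l m}\prod_{k=1}^K\phi(z_k-h^l_k\mu_{b_l,m,k})}{\sum_{l=0}^{3^K-1}\sum_{m=1}^{M_{b_l}}\pi_{b_l m}\prod_{k=1}^K\phi(z_k-h^l_k\mu_{b_l,m,k})},$$ with $\phi$ the standard normal density. Then for any $k\in\{1,\dots,K\}$, with the other coordinates held fixed: $lfdr(\mathbf{z})$ is non-increasing in $z_k$ for $z_k>0$ provided $z_{k'}>0$ for all $k'$; and $lfdr(\mathbf{z})$ is non-decreasing in $z_k$ for $z_k<0$ provided $z_{k'}<0$ for all $k'$.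
   Context: The latent configuration is $\mathbf{H}\in\{-1,0,1\}^K$; enumerate the $3^K$ configurations as $\mathbf{h}^0,\dots,\mathbf{h}^{3^K-1}$ with $\mathbf{h}^0=(0,\dots,0)^T$, and let $b_l=\sum_{k=1}^K2^{K-k}|h^l_k|$ (the $k$-th binary digit of $b_l$ is $|h^l_k|$). csmGmm: for each $b\in\{0,\dots,2^K-1\}$ there is a positive integer $M_b$ ($M_0=1$), mean-magnitude vectors $\boldsymbol{\mu}_{b,m}=(\mu_{b,m,1},\dots,\mu_{b,m,K})^T$, $m=1,\dots,M_b$, with $\mu_{b,m,k}=0$ if the $k$-th binary digit of $b$ is $0$ and $\mu_{b,m,k}>0$ otherwise, and $\mu_{2^K-1,m,k}\ge\mu_{b,m',k}$ for all $b<2^K-1$ and all $m,m',k$; and probabilities $\Pr(\mathbf{H}=\mathbf{h}^l,D=m)=\pi_{b_l m}\ge0$ (shared across configurations with equal $b_l$) summing to one. Conditional on $\mathbf{H}=\mathbf{h}^l$, $D=m$, $\mathbf{Z}\sim N_K(\mathrm{diag}(\mathbf{h}^l)\boldsymbol{\mu}_{b_l,m},\mathbf{I}_K)$. The r-csmGmm is this model with the additional restriction $M_{2^K-1}=1$. The replication composite null for parameters $\theta_1,\dots,\theta_K$ is $\{\bigcup_k\theta_k=0\}\cup\{\bigcup_{k\ne k'}\mathrm{sign}(\theta_k)\ne\mathrm{sign}(\theta_{k'})\}$, corresponding to $\mathbf{H}\in\mathcal{H}^{rep}_0$. *)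

theory Defs
  imports "HOL-Probability.Distributions"
begin

definition configs :: "nat \<Rightarrow> (nat \<Rightarrow> int) set" where
  "configs K = {h. (\<forall>k\<in>{1..K}. h k \<in> {-1, 0, 1}) \<and> (\<forall>k. k \<notin> {1..K} \<longrightarrow> h k = 0)}"

definition bidx :: "nat \<Rightarrow> (nat \<Rightarrow> int) \<Rightarrow> nat" where
  "bidx K h = (\<Sum>k=1..K. 2 ^ (K - k) * nat \<bar>h k\<bar>)"

definition digit :: "nat \<Rightarrow> nat \<Rightarrow> nat \<Rightarrow> nat" where
  "digit K b k = (b div 2 ^ (K - k)) mod 2"

definition Ha_rep :: "nat \<Rightarrow> (nat \<Rightarrow> int) set" where
  "Ha_rep K = {(\<lambda>k. if k \<in> {1..K} then 1 else 0), (\<lambda>k. if k \<in> {1..K} then -1 else 0)}"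

definition H0_rep :: "nat \<Rightarrow> (nat \<Rightarrow> int) set" where
  "H0_rep K = configs K - Ha_rep K"

text \<open>csmGmm parameters: M b (number of components for class b),
  mu b m k (mean magnitudes), p b m (the probabilities pi_{b m}).\<close>
definition csmGmm :: "nat \<Rightarrow> (nat \<Rightarrow> nat) \<Rightarrow> (nat \<Rightarrow> nat \<Rightarrow> nat \<Rightarrow> real) \<Rightarrow> (nat \<Rightarrow> nat \<Rightarrow> real) \<Rightarrow> bool" where
  "csmGmm K M mu p \<longleftrightarrow>
     M 0 = 1 \<and>
     (\<forall>b<2^K. M b \<ge> 1) \<and>
     (\<forall>b<2^K. \<forall>m\<in>{1..M b}. \<forall>k\<in>{1..K}.
        (digit K b k = 0 \<longrightarrow> mu b m k = 0) \<and> (digit K b k \<noteq> 0 \<longrightarrow> mu b m k > 0)) \<and>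
     (\<forall>b<2^K - 1. \<forall>m\<in>{1..M (2^K - 1)}. \<forall>m'\<in>{1..M b}. \<forall>k\<in>{1..K}.
        mu (2^K - 1) m k \<ge> mu b m' k) \<and>
     (\<forall>b<2^K. \<forall>m\<in>{1..M b}. p b m \<ge> 0) \<and>
     (\<Sum>h\<in>configs K. \<Sum>m=1..M (bidx K h). p (bidx K h) m) = 1"

definition r_csmGmm :: "nat \<Rightarrow> (nat \<Rightarrow> nat) \<Rightarrow> (nat \<Rightarrow> nat \<Rightarrow> nat \<Rightarrow> real) \<Rightarrow> (nat \<Rightarrow> nat \<Rightarrow> real) \<Rightarrow> bool" where
  "r_csmGmm K M mu p \<longleftrightarrow> csmGmm K M mu p \<and> M (2^K - 1) = 1"

text \<open>Joint density term Pr(H = h) f(z | H = h), summed over D.\<close>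
definition dens :: "nat \<Rightarrow> (nat \<Rightarrow> nat) \<Rightarrow> (nat \<Rightarrow> nat \<Rightarrow> nat \<Rightarrow> real) \<Rightarrow> (nat \<Rightarrow> nat \<Rightarrow> real)
    \<Rightarrow> (nat \<Rightarrow> int) \<Rightarrow> (nat \<Rightarrow> real) \<Rightarrow> real" where
  "dens K M mu p h z = (\<Sum>m=1..M (bidx K h). p (bidx K h) m *
      (\<Prod>k=1..K. std_normal_density (z k - real_of_int (h k) * mu (bidx K h) m k)))"

definition lfdr :: "nat \<Rightarrow> (nat \<Rightarrow> nat) \<Rightarrow> (nat \<Rightarrow> nat \<Rightarrow> nat \<Rightarrow> real) \<Rightarrow> (nat \<Rightarrow> nat \<Rightarrow> real)
    \<Rightarrow> (nat \<Rightarrow> real) \<Rightarrow> real" where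
  "lfdr K M mu p z = (\<Sum>h\<in>H0_rep K. dens K M mu p h z) / (\<Sum>h\<in>configs K. dens K M mu p h z)"

end

theory Submission
  imports Defs
begin
definition Qd :: "nat \<Rightarrow> (nat \<Rightarrow> int) \<Rightarrow> (nat \<Rightarrow> real) \<Rightarrow> (nat \<Rightarrow> real) \<Rightarrow> real" where
  "Qd K h \<nu> z = (\<Prod>j=1..K. std_normal_density (z j - real_of_int (h j) * \<nu> j))"
definition Xh :: "nat \<Rightarrow> (nat \<Rightarrow> int) \<Rightarrow> (nat \<Rightarrow> real) \<Rightarrow> (nat \<Rightarrow> real) \<Rightarrow> real" where
  "Xh K h \<nu> z = (\<Sum>j=1..K. z j * real_of_int (h j) * \<nu> j)"
definition cK :: "nat \<Rightarrow> real" where "cK K = (1 / sqrt (2 * pi)) ^ K"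
definition Gz :: "nat \<Rightarrow> (nat \<Rightarrow> real) \<Rightarrow> real" where "Gz K z = exp (- (\<Sum>j=1..K. (z j)\<^sup>2) / 2)"
definition Eh :: "nat \<Rightarrow> (nat \<Rightarrow> int) \<Rightarrow> (nat \<Rightarrow> real) \<Rightarrow> real" where
  "Eh K h \<nu> = exp (- (\<Sum>j=1..K. (real_of_int (h j) * \<nu> j)\<^sup>2) / 2)"

lemma pt: "std_normal_density (x - y) = (1 / sqrt (2 * pi)) * exp (- x\<^sup>2 / 2) * exp (- y\<^sup>2 / 2) * exp (x * y)"
    for x y :: real
proof -
  have e: "- (x - y)\<^sup>2 / 2 = - x\<^sup>2 / 2 + - y\<^sup>2 / 2 + x * y" by (simp add: power2_diff diff_divide_distrib add_divide_distrib)
  have "exp (- (x - y)\<^sup>2 / 2) = exp (- x\<^sup>2 / 2) * exp (- y\<^sup>2 / 2) * exp (x * y)"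
    unfolding e by (simp only: exp_add)
  then show ?thesis unfolding std_normal_density_def by (simp only: mult.assoc)
qed

lemma Qd_formula: "Qd K h \<nu> z = cK K * Gz K z * Eh K h \<nu> * exp (Xh K h \<nu> z)"
proof -
  have "Qd K h \<nu> z = (\<Prod>j=1..K. (1 / sqrt (2 * pi)) * exp (- (z j)\<^sup>2 / 2) * exp (- (real_of_int (h j) * \<nu> j)\<^sup>2 / 2) * exp (z j * (real_of_int (h j) * \<nu> j)))"
    unfolding Qd_def by (intro prod.cong refl) (rule pt)
  also have "\<dots> = (\<Prod>j=1..K. (1 / sqrt (2 * pi))) * (\<Prod>j=1..K. exp (- (z j)\<^sup>2 / 2)) * (\<Prod>j=1..K. exp (- (real_of_int (h j) * \<nu> j)\<^sup>2 / 2)) * (\<Prod>j=1..K. exp (z j * (real_of_int (h j) * \<nu> j)))"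
    by (simp only: prod.distrib)
  also have "(\<Prod>j=1..K. (1 / sqrt (2 * pi))) = cK K" by (simp add: cK_def)
  also have "(\<Prod>j=1..K. exp (- (z j)\<^sup>2 / 2)) = Gz K z"
    by (simp add: Gz_def exp_sum[symmetric] sum_negf sum_divide_distrib[symmetric])
  also have "(\<Prod>j=1..K. exp (- (real_of_int (h j) * \<nu> j)\<^sup>2 / 2)) = Eh K h \<nu>"
    by (simp add: Eh_def exp_sum[symmetric] sum_negf sum_divide_distrib[symmetric])
  also have "(\<Prod>j=1..K. exp (z j * (real_of_int (h j) * \<nu> j))) = exp (Xh K h \<nu> z)"
    by (simp add: Xh_def exp_sum[symmetric] mult.assoc)
  finally show ?thesis .
qed

lemma Qd_pair: "Qd K h \<nu> z + Qd K (\<lambda>j. - h j) \<nu> z = 2 * cK K * Gz K z * Eh K h \<nu> * cosh (Xh K h \<nu> z)"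
proof -
  have "Eh K (\<lambda>j. - h j) \<nu> = Eh K h \<nu>" by (simp add: Eh_def)
  moreover have "Xh K (\<lambda>j. - h j) \<nu> z = - Xh K h \<nu> z" by (simp add: Xh_def sum_negf)
  ultimately show ?thesis
    by (simp add: Qd_formula cosh_def algebra_simps)
qed

lemma Qd_pos: "Qd K h \<nu> z > 0"
  unfolding Qd_def by (intro prod_pos) (simp add: std_normal_density_def)

lemma sum_pow2: "(\<Sum>k=1..K. (2::nat) ^ (K - k)) = 2 ^ K - 1"
proof (induction K)
  case 0 then show ?case by simp
next
  case (Suc K)
  have "(\<Sum>k=1..Suc K. (2::nat) ^ (Suc K - k)) = (\<Sum>k=1..K. 2 ^ (Suc K - k)) + 1"
    by (simp add: sum.cl_ivl_Suc)
  also have "(\<Sum>k=1..K. (2::nat) ^ (Suc K - k)) = (\<Sum>k=1..K. 2 * 2 ^ (K - k))"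
    by (intro sum.cong refl) (simp add: Suc_diff_le)
  also have "\<dots> = 2 * (2 ^ K - 1)" by (simp only: sum_distrib_left[symmetric] Suc.IH)
  also have "2 * (2 ^ K - 1) + 1 = (2::nat) ^ Suc K - 1"
  proof -
    have "(1::nat) \<le> 2 ^ K" by simp
    then show ?thesis by (simp only: power_Suc)
  qed
  finally show ?case .
qed

lemma Xh_split:
  assumes "k \<in> {1..K}"
  shows "Xh K h \<nu> (z(k := u)) = (\<Sum>j\<in>{1..K} - {k}. z j * real_of_int (h j) * \<nu> j) + u * (real_of_int (h k) * \<nu> k)"
proof -
  have "Xh K h \<nu> (z(k := u)) = (z(k:=u)) k * real_of_int (h k) * \<nu> k + (\<Sum>j\<in>{1..K} - {k}. (z(k:=u)) j * real_of_int (h j) * \<nu> j)"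
    unfolding Xh_def by (rule sum.remove) (use assms in auto)
  also have "(\<Sum>j\<in>{1..K} - {k}. (z(k:=u)) j * real_of_int (h j) * \<nu> j) = (\<Sum>j\<in>{1..K} - {k}. z j * real_of_int (h j) * \<nu> j)"
    by (intro sum.cong) auto
  also have "(z(k:=u)) k * real_of_int (h k) * \<nu> k = u * (real_of_int (h k) * \<nu> k)" by simp
  finally show ?thesis by (simp only: add.commute)
qed

lemma X_bound:
  assumes "\<And>j. j \<in> A \<Longrightarrow> \<bar>real_of_int (h j)\<bar> \<le> 1 \<and> 0 \<le> \<nu> j \<and> \<nu> j \<le> w j"
  shows "\<bar>\<Sum>j\<in>A. z j * real_of_int (h j) * \<nu> j\<bar> \<le> (\<Sum>j\<in>A. \<bar>z j\<bar> * w j)"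
proof -
  have "\<bar>\<Sum>j\<in>A. z j * real_of_int (h j) * \<nu> j\<bar> \<le> (\<Sum>j\<in>A. \<bar>z j * real_of_int (h j) * \<nu> j\<bar>)"
    by (rule sum_abs)
  also have "\<dots> \<le> (\<Sum>j\<in>A. \<bar>z j\<bar> * w j)"
  proof (intro sum_mono)
    fix j assume "j \<in> A"
    with assms have h: "\<bar>real_of_int (h j)\<bar> \<le> 1" "0 \<le> \<nu> j" "\<nu> j \<le> w j" by auto
    have "\<bar>z j * real_of_int (h j) * \<nu> j\<bar> = \<bar>z j\<bar> * (\<bar>real_of_int (h j)\<bar> * \<nu> j)"
      using h by (simp add: abs_mult)
    also have "\<dots> \<le> \<bar>z j\<bar> * w j"
    proof (rule mult_left_mono)
      have "\<bar>real_of_int (h j)\<bar> * \<nu> j \<le> 1 * \<nu> j" using h by (intro mult_right_mono) auto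
      then show "\<bar>real_of_int (h j)\<bar> * \<nu> j \<le> w j" using h by simp
    qed simp
    finally show "\<bar>z j * real_of_int (h j) * \<nu> j\<bar> \<le> \<bar>z j\<bar> * w j" .
  qed
  finally show ?thesis .
qed

lemma cosh_core:
  fixes a b e f :: real
  assumes "\<bar>a\<bar> \<le> b" "\<bar>e\<bar> \<le> f"
  shows "cosh (a + e) * cosh b \<le> cosh a * cosh (b + f)"
proof -
  have cp: "\<And>x::real. cosh x > 0" by (smt (verit) cosh_real_pos)
  have b0: "b \<ge> 0" "f \<ge> 0" using assms by auto
  have 1: "cosh e \<le> cosh f"
    using cosh_real_nonneg_le_iff[of "\<bar>e\<bar>" f] assms b0 by simp
  have 2: "sinh \<bar>a\<bar> * cosh b \<le> cosh a * sinh b"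
  proof -
    have "sinh (b - \<bar>a\<bar>) \<ge> 0" using assms by simp
    hence "sinh b * cosh \<bar>a\<bar> - cosh b * sinh \<bar>a\<bar> \<ge> 0" by (simp add: sinh_diff)
    thus ?thesis by (simp add: mult.commute)
  qed
  have 3: "sinh \<bar>e\<bar> \<le> sinh f" "0 \<le> sinh \<bar>e\<bar>" using assms sinh_real_le_iff[of "\<bar>e\<bar>" f] by auto
  have "sinh a * sinh e * cosh b \<le> \<bar>sinh a * sinh e\<bar> * cosh b"
    using cp[of b] by (intro mult_right_mono) auto
  also have "\<dots> = sinh \<bar>a\<bar> * cosh b * sinh \<bar>e\<bar>" by (simp add: abs_mult)
  also have "\<dots> \<le> cosh a * sinh b * sinh \<bar>e\<bar>" using 2 3 by (intro mult_right_mono) auto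
  also have "\<dots> \<le> cosh a * sinh b * sinh f"
    using 3 cp[of a] b0 by (intro mult_left_mono) auto
  finally have A: "sinh a * sinh e * cosh b \<le> cosh a * sinh b * sinh f" .
  have B: "cosh a * cosh e * cosh b \<le> cosh a * cosh b * cosh f"
    using mult_left_mono[OF 1, of "cosh a * cosh b"] cp[of a] cp[of b] by (simp add: ac_simps)
  have E1: "cosh (a + e) * cosh b = cosh a * cosh e * cosh b + sinh a * sinh e * cosh b"
    by (simp add: cosh_add algebra_simps)
  have E2: "cosh a * cosh (b + f) = cosh a * cosh b * cosh f + cosh a * sinh b * sinh f"
    by (simp add: cosh_add algebra_simps)
  show ?thesis unfolding E1 E2 using A B by linarith
qed

lemma core_pos:
  fixes X0 S0 c d s t :: real
  assumes "\<bar>X0\<bar> \<le> S0" "\<bar>c\<bar> \<le> d" "0 < s" "s \<le> t"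
  shows "cosh (X0 + t * c) * cosh (S0 + s * d) \<le> cosh (X0 + s * c) * cosh (S0 + t * d)"
proof -
  have "\<bar>s * c\<bar> \<le> s * d" using assms by (simp add: abs_mult mult_left_mono)
  then have 1: "\<bar>X0 + s * c\<bar> \<le> S0 + s * d" using assms(1) by linarith
  have 2: "\<bar>(t - s) * c\<bar> \<le> (t - s) * d" using assms by (simp add: abs_mult mult_left_mono)
  have "cosh (X0 + s * c + (t - s) * c) * cosh (S0 + s * d) \<le> cosh (X0 + s * c) * cosh (S0 + s * d + (t - s) * d)"
    by (rule cosh_core[OF 1 2])
  moreover have "X0 + s * c + (t - s) * c = X0 + t * c" "S0 + s * d + (t - s) * d = S0 + t * d"
    by (simp_all add: algebra_simps)
  ultimately show ?thesis by simp
qed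

lemma core_neg:
  fixes X0 S0 c d s t :: real
  assumes "\<bar>X0\<bar> \<le> - S0" "\<bar>c\<bar> \<le> d" "s \<le> t" "t < 0"
  shows "cosh (X0 + s * c) * cosh (S0 + t * d) \<le> cosh (X0 + t * c) * cosh (S0 + s * d)"
proof -
  have "cosh (- X0 + (- s) * c) * cosh (- S0 + (- t) * d) \<le> cosh (- X0 + (- t) * c) * cosh (- S0 + (- s) * d)"
    by (rule core_pos) (use assms in auto)
  moreover have "- X0 + (- s) * c = - (X0 + s * c)" "- S0 + (- t) * d = - (S0 + t * d)"
    "- X0 + (- t) * c = - (X0 + t * c)" "- S0 + (- s) * d = - (S0 + s * d)" by simp_all
  ultimately show ?thesis by (simp only: cosh_minus)
qed

lemma configs_finite: "finite (configs K)"
proof -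
  have "configs K = {f. \<forall>x. (x \<in> {1..K} \<longrightarrow> f x \<in> {-1,0,1}) \<and> (x \<notin> {1..K} \<longrightarrow> f x = 0)}"
    unfolding configs_def by auto
  then show ?thesis using finite_set_of_finite_funs[of "{1..K}" "{-1,0,1::int}" 0] by simp
qed

lemma configs_neg: "h \<in> configs K \<Longrightarrow> (\<lambda>j. - h j) \<in> configs K"
  unfolding configs_def by auto

lemma bidx_neg: "bidx K (\<lambda>j. - h j) = bidx K h"
  unfolding bidx_def by simp

lemma configs_abs: assumes "h \<in> configs K" shows "\<bar>real_of_int (h j)\<bar> \<le> 1"
proof -
  have "h j \<in> {-1,0,1}" using assms unfolding configs_def by (cases "j \<in> {1..K}") auto
  then show ?thesis by auto
qed

lemma bidx_le: assumes "h \<in> configs K" shows "bidx K h \<le> 2 ^ K - 1"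
proof -
  have "bidx K h \<le> (\<Sum>k=1..K. 2 ^ (K - k) * 1)"
    unfolding bidx_def
  proof (intro sum_mono mult_left_mono)
    fix k assume "k \<in> {1..K}"
    then have "h k \<in> {-1,0,1}" using assms unfolding configs_def by auto
    then show "nat \<bar>h k\<bar> \<le> 1" by auto
  qed simp
  then show ?thesis using sum_pow2[of K] by simp
qed

definition one :: "nat \<Rightarrow> nat \<Rightarrow> int" where "one K = (\<lambda>k. if k \<in> {1..K} then 1 else 0)"
definition mone :: "nat \<Rightarrow> nat \<Rightarrow> int" where "mone K = (\<lambda>k. if k \<in> {1..K} then -1 else 0)"

lemma Ha_eq: "Ha_rep K = {one K, mone K}" unfolding Ha_rep_def one_def mone_def by simp
lemma one_configs: "one K \<in> configs K" "mone K \<in> configs K"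
  unfolding one_def mone_def configs_def by auto
lemma neg_one: "(\<lambda>j. - one K j) = mone K" "(\<lambda>j. - mone K j) = one K"
  unfolding one_def mone_def by auto
lemma one_ne: "K \<ge> 1 \<Longrightarrow> one K \<noteq> mone K"
  unfolding one_def mone_def by (metis atLeastAtMost_iff le_refl one_neq_neg_one)
lemma bidx_one: "bidx K (one K) = 2 ^ K - 1" "bidx K (mone K) = 2 ^ K - 1"
proof -
  have "bidx K (one K) = (\<Sum>k=1..K. 2 ^ (K - k))" unfolding bidx_def one_def
    by (intro sum.cong) auto
  then show "bidx K (one K) = 2 ^ K - 1" using sum_pow2 by simp
  have "bidx K (mone K) = (\<Sum>k=1..K. 2 ^ (K - k))" unfolding bidx_def mone_def
    by (intro sum.cong) auto
  then show "bidx K (mone K) = 2 ^ K - 1" using sum_pow2 by simp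
qed

lemma H0_neg: assumes "h \<in> H0_rep K" shows "(\<lambda>j. - h j) \<in> H0_rep K"
proof -
  have h: "h \<in> configs K" "h \<noteq> one K" "h \<noteq> mone K" using assms unfolding H0_rep_def Ha_eq by auto
  have "(\<lambda>j. - h j) \<noteq> one K"
  proof
    assume a: "(\<lambda>j. - h j) = one K"
    have "h = (\<lambda>j. - one K j)" unfolding a[symmetric] by simp
    then show False using h neg_one by simp
  qed
  moreover have "(\<lambda>j. - h j) \<noteq> mone K"
  proof
    assume a: "(\<lambda>j. - h j) = mone K"
    have "h = (\<lambda>j. - mone K j)" unfolding a[symmetric] by simp
    then show False using h neg_one by simp
  qed
  ultimately show ?thesis using configs_neg[OF h(1)] unfolding H0_rep_def Ha_eq by auto
qed

lemma dens_Qd: "dens K M mu p h z = (\<Sum>m=1..M (bidx K h). p (bidx K h) m * Qd K h (mu (bidx K h) m) z)"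
  unfolding dens_def Qd_def by simp

lemma dens_pair: "dens K M mu p h z + dens K M mu p (\<lambda>j. - h j) z =
   (\<Sum>m=1..M (bidx K h). p (bidx K h) m * (2 * cK K * Gz K z * Eh K h (mu (bidx K h) m) * cosh (Xh K h (mu (bidx K h) m) z)))"
  unfolding dens_Qd bidx_neg sum.distrib[symmetric] distrib_left[symmetric] Qd_pair ..

context
  fixes K M mu p
  assumes R: "r_csmGmm K M mu p" and K1: "K \<ge> 1"
begin

lemma MT: "M (2 ^ K - 1) = 1" using R unfolding r_csmGmm_def by simp

lemma p_nonneg: "h \<in> configs K \<Longrightarrow> m \<in> {1..M (bidx K h)} \<Longrightarrow> p (bidx K h) m \<ge> 0"
  using R bidx_le[of h K] unfolding r_csmGmm_def csmGmm_def
  by (metis Suc_pred' diff_less le_imp_less_Suc one_less_numeral_iff pos2 semiring_norm(76) zero_less_power)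

lemma mu_bounds:
  assumes h: "h \<in> configs K" and m: "m \<in> {1..M (bidx K h)}" and j: "j \<in> {1..K}"
  shows "0 \<le> mu (bidx K h) m j \<and> mu (bidx K h) m j \<le> mu (2 ^ K - 1) 1 j"
proof -
  let ?b = "bidx K h"
  have lt: "?b < 2 ^ K" using bidx_le[OF h] by (metis Suc_pred' le_imp_less_Suc pos2 zero_less_power)
  have c: "csmGmm K M mu p" using R unfolding r_csmGmm_def by simp
  have "0 \<le> mu ?b m j"
    using c lt m j unfolding csmGmm_def by (metis less_eq_real_def)
  moreover have "mu ?b m j \<le> mu (2 ^ K - 1) 1 j"
  proof (cases "?b = 2 ^ K - 1")
    case True
    then have "m = 1" using m MT by simp
    then show ?thesis using True by simp
  next
    case False
    then have "?b < 2 ^ K - 1" using bidx_le[OF h] by simp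
    moreover have "(1::nat) \<in> {1..M (2 ^ K - 1)}" using MT by simp
    ultimately show ?thesis using c m j unfolding csmGmm_def by blast
  qed
  ultimately show ?thesis by simp
qed

lemma dens_nonneg: "h \<in> configs K \<Longrightarrow> dens K M mu p h z \<ge> 0"
  unfolding dens_Qd by (intro sum_nonneg mult_nonneg_nonneg p_nonneg less_imp_le[OF Qd_pos])


lemma dens_pos_total: "(\<Sum>h\<in>configs K. dens K M mu p h z) > 0"
proof (rule ccontr)
  assume "\<not> ?thesis"
  then have z: "(\<Sum>h\<in>configs K. dens K M mu p h z) = 0"
    using sum_nonneg[of "configs K" "\<lambda>h. dens K M mu p h z"] dens_nonneg by force
  have "\<forall>h\<in>configs K. dens K M mu p h z = 0"
    using z by (subst (asm) sum_nonneg_eq_0_iff) (auto simp: configs_finite dens_nonneg)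
  then have "\<forall>h\<in>configs K. \<forall>m\<in>{1..M (bidx K h)}. p (bidx K h) m * Qd K h (mu (bidx K h) m) z = 0"
  proof (intro ballI)
    fix h m assume a: "\<forall>h\<in>configs K. dens K M mu p h z = 0" and h: "h \<in> configs K" and m: "m \<in> {1..M (bidx K h)}"
    have "(\<Sum>m=1..M (bidx K h). p (bidx K h) m * Qd K h (mu (bidx K h) m) z) = 0"
      using a h unfolding dens_Qd by simp
    moreover have "\<forall>m\<in>{1..M (bidx K h)}. p (bidx K h) m * Qd K h (mu (bidx K h) m) z \<ge> 0"
      using h by (auto intro!: mult_nonneg_nonneg p_nonneg less_imp_le[OF Qd_pos])
    ultimately show "p (bidx K h) m * Qd K h (mu (bidx K h) m) z = 0"
      using m by (subst (asm) sum_nonneg_eq_0_iff) auto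
  qed
  then have "\<forall>h\<in>configs K. \<forall>m\<in>{1..M (bidx K h)}. p (bidx K h) m = 0"
    using Qd_pos by (metis mult_eq_0_iff order_less_irrefl)
  then have "(\<Sum>h\<in>configs K. \<Sum>m=1..M (bidx K h). p (bidx K h) m) = 0" by simp
  moreover have "(\<Sum>h\<in>configs K. \<Sum>m=1..M (bidx K h). p (bidx K h) m) = 1"
    using R unfolding r_csmGmm_def csmGmm_def by simp
  ultimately show False by simp
qed

lemma A_formula: "dens K M mu p (one K) z + dens K M mu p (mone K) z =
   p (2 ^ K - 1) 1 * (2 * cK K * Gz K z * Eh K (one K) (mu (2 ^ K - 1) 1) * cosh (Xh K (one K) (mu (2 ^ K - 1) 1) z))"
  using dens_pair[of K M mu p "one K" z] unfolding neg_one bidx_one MT by simp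

lemma lfdr_le:
  assumes H: "\<forall>h\<in>configs K. \<forall>m\<in>{1..M (bidx K h)}.
     cosh (Xh K h (mu (bidx K h) m) za) * cosh (Xh K (one K) (mu (2 ^ K - 1) 1) zb)
     \<le> cosh (Xh K h (mu (bidx K h) m) zb) * cosh (Xh K (one K) (mu (2 ^ K - 1) 1) za)"
  shows "lfdr K M mu p za \<le> lfdr K M mu p zb"
proof -
  define N where "N z = (\<Sum>h\<in>H0_rep K. dens K M mu p h z)" for z
  define A where "A z = dens K M mu p (one K) z + dens K M mu p (mone K) z" for z
  define S where "S z = Xh K (one K) (mu (2 ^ K - 1) 1) z" for z
  define E' where "E' = Eh K (one K) (mu (2 ^ K - 1) 1)"
  define pT where "pT = p (2 ^ K - 1) 1"
  define F where "F h m z = p (bidx K h) m * (2 * cK K * Gz K z * Eh K h (mu (bidx K h) m) * cosh (Xh K h (mu (bidx K h) m) z))" for h m z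
  have fin: "finite (H0_rep K)" unfolding H0_rep_def using configs_finite by simp
  have H0c: "H0_rep K \<subseteq> configs K" unfolding H0_rep_def by auto
  have tot: "(\<Sum>h\<in>configs K. dens K M mu p h z) = N z + A z" for z
  proof -
    have "Ha_rep K \<subseteq> configs K" unfolding Ha_eq using one_configs by auto
    then have "(\<Sum>h\<in>configs K. dens K M mu p h z) = N z + (\<Sum>h\<in>Ha_rep K. dens K M mu p h z)"
      unfolding N_def H0_rep_def using configs_finite by (subst sum.subset_diff) auto
    also have "(\<Sum>h\<in>Ha_rep K. dens K M mu p h z) = A z"
      unfolding Ha_eq A_def using one_ne[OF K1] by simp
    finally show ?thesis .
  qed
  have lf: "lfdr K M mu p z = N z / (N z + A z)" for z
    unfolding lfdr_def tot N_def ..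
  have Dpos: "N z + A z > 0" for z using dens_pos_total tot by metis
  have Nn: "N z \<ge> 0" for z unfolding N_def using H0c by (intro sum_nonneg dens_nonneg) auto
  have An: "A z = pT * (2 * cK K * Gz K z * E' * cosh (S z))" for z
    unfolding A_def A_formula pT_def E'_def S_def ..
  have N2: "2 * N z = (\<Sum>h\<in>H0_rep K. \<Sum>m=1..M (bidx K h). F h m z)" for z
  proof -
    have "(\<Sum>h\<in>H0_rep K. dens K M mu p (\<lambda>j. - h j) z) = N z"
      unfolding N_def
      by (rule sum.reindex_bij_witness[of _ "\<lambda>h j. - h j" "\<lambda>h j. - h j"]) (auto intro: H0_neg)
    then have "2 * N z = (\<Sum>h\<in>H0_rep K. dens K M mu p h z + dens K M mu p (\<lambda>j. - h j) z)"
      unfolding sum.distrib N_def by simp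
    then show ?thesis unfolding dens_pair F_def .
  qed
  have key: "2 * N za * A zb \<le> 2 * N zb * A za"
  proof -
    have "2 * N za * A zb = (\<Sum>h\<in>H0_rep K. \<Sum>m=1..M (bidx K h). F h m za * A zb)"
      unfolding N2 sum_distrib_right ..
    also have "\<dots> \<le> (\<Sum>h\<in>H0_rep K. \<Sum>m=1..M (bidx K h). F h m zb * A za)"
    proof (intro sum_mono)
      fix h m assume h: "h \<in> H0_rep K" and m: "m \<in> {1..M (bidx K h)}"
      have hc: "h \<in> configs K" using h H0c by auto
      define W where "W = p (bidx K h) m * pT * (4 * cK K * cK K * Gz K za * Gz K zb * Eh K h (mu (bidx K h) m) * E')"
      have W0: "W \<ge> 0" unfolding W_def pT_def E'_def Gz_def Eh_def cK_def
        using p_nonneg[OF hc m] p_nonneg[OF one_configs(1), of 1] MT bidx_one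
        by (intro mult_nonneg_nonneg) auto
      have e1: "F h m za * A zb = W * (cosh (Xh K h (mu (bidx K h) m) za) * cosh (S zb))"
        unfolding F_def An W_def by (simp add: ac_simps)
      have e2: "F h m zb * A za = W * (cosh (Xh K h (mu (bidx K h) m) zb) * cosh (S za))"
        unfolding F_def An W_def by (simp add: ac_simps)
      show "F h m za * A zb \<le> F h m zb * A za"
        unfolding e1 e2 using H hc m W0 unfolding S_def by (intro mult_left_mono) auto
    qed
    also have "\<dots> = 2 * N zb * A za"
      unfolding N2 sum_distrib_right ..
    finally show ?thesis .
  qed
  then have key': "N za * A zb \<le> N zb * A za" by simp
  have "N za * (N zb + A zb) \<le> N zb * (N za + A za)"
    using key' by (simp add: algebra_simps)
  then show ?thesis unfolding lf using Dpos[of za] Dpos[of zb]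
    by (simp add: divide_le_eq le_divide_eq mult.commute)
qed


lemma H_common:
  fixes z :: "nat \<Rightarrow> real"
  assumes k: "k \<in> {1..K}" and h: "h \<in> configs K" and m: "m \<in> {1..M (bidx K h)}"
  defines "X0 \<equiv> (\<Sum>j\<in>{1..K} - {k}. z j * real_of_int (h j) * mu (bidx K h) m j)"
    and "S0 \<equiv> (\<Sum>j\<in>{1..K} - {k}. z j * mu (2 ^ K - 1) 1 j)"
    and "c \<equiv> real_of_int (h k) * mu (bidx K h) m k"
    and "d \<equiv> mu (2 ^ K - 1) 1 k"
  shows "\<And>u. Xh K h (mu (bidx K h) m) (z(k := u)) = X0 + u * c"
    and "\<And>u. Xh K (one K) (mu (2 ^ K - 1) 1) (z(k := u)) = S0 + u * d"
    and "\<bar>X0\<bar> \<le> (\<Sum>j\<in>{1..K} - {k}. \<bar>z j\<bar> * mu (2 ^ K - 1) 1 j)"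
    and "\<bar>c\<bar> \<le> d"
proof -
  show "\<And>u. Xh K h (mu (bidx K h) m) (z(k := u)) = X0 + u * c"
    unfolding X0_def c_def using k by (rule Xh_split)
  have o: "\<And>j. j \<in> {1..K} \<Longrightarrow> real_of_int (one K j) = 1" unfolding one_def by simp
  have "(\<Sum>j\<in>{1..K} - {k}. z j * real_of_int (one K j) * mu (2 ^ K - 1) 1 j) = S0"
    unfolding S0_def by (intro sum.cong) (auto simp: o)
  then show "\<And>u. Xh K (one K) (mu (2 ^ K - 1) 1) (z(k := u)) = S0 + u * d"
    using Xh_split[OF k, of "one K"] o[OF k] unfolding d_def by simp
  show "\<bar>X0\<bar> \<le> (\<Sum>j\<in>{1..K} - {k}. \<bar>z j\<bar> * mu (2 ^ K - 1) 1 j)"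
    unfolding X0_def by (rule X_bound) (use configs_abs[OF h] mu_bounds[OF h m] in auto)
  have "\<bar>c\<bar> = \<bar>real_of_int (h k)\<bar> * mu (bidx K h) m k"
    unfolding c_def using mu_bounds[OF h m k] by (simp add: abs_mult)
  also have "\<dots> \<le> 1 * mu (bidx K h) m k"
    using configs_abs[OF h] mu_bounds[OF h m k] by (intro mult_right_mono) auto
  also have "\<dots> \<le> d" unfolding d_def using mu_bounds[OF h m k] by simp
  finally show "\<bar>c\<bar> \<le> d" .
qed

lemma main_pos:
  assumes k: "k \<in> {1..K}" and zp: "\<forall>k'\<in>{1..K}. k' \<noteq> k \<longrightarrow> z k' > 0" and st: "0 < s" "s \<le> t"
  shows "lfdr K M mu p (z(k := t)) \<le> lfdr K M mu p (z(k := s))"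
proof (rule lfdr_le, intro ballI)
  fix h m assume h: "h \<in> configs K" and m: "m \<in> {1..M (bidx K h)}"
  note HC1 = H_common(1)[OF k h m, where z=z] and HC2 = H_common(2)[OF k h m, where z=z]
    and HC3 = H_common(3)[OF k h m, where z=z] and HC4 = H_common(4)[OF k h m]
  have "(\<Sum>j\<in>{1..K} - {k}. \<bar>z j\<bar> * mu (2 ^ K - 1) 1 j) = (\<Sum>j\<in>{1..K} - {k}. z j * mu (2 ^ K - 1) 1 j)"
    using zp by (intro sum.cong) auto
  then show "cosh (Xh K h (mu (bidx K h) m) (z(k := t))) * cosh (Xh K (one K) (mu (2 ^ K - 1) 1) (z(k := s)))
     \<le> cosh (Xh K h (mu (bidx K h) m) (z(k := s))) * cosh (Xh K (one K) (mu (2 ^ K - 1) 1) (z(k := t)))"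
    unfolding HC1 HC2 using HC3 HC4 st by (intro core_pos) auto
qed

lemma main_neg:
  assumes k: "k \<in> {1..K}" and zn: "\<forall>k'\<in>{1..K}. k' \<noteq> k \<longrightarrow> z k' < 0" and st: "s \<le> t" "t < 0"
  shows "lfdr K M mu p (z(k := s)) \<le> lfdr K M mu p (z(k := t))"
proof (rule lfdr_le, intro ballI)
  fix h m assume h: "h \<in> configs K" and m: "m \<in> {1..M (bidx K h)}"
  note HC1 = H_common(1)[OF k h m, where z=z] and HC2 = H_common(2)[OF k h m, where z=z]
    and HC3 = H_common(3)[OF k h m, where z=z] and HC4 = H_common(4)[OF k h m]
  have "(\<Sum>j\<in>{1..K} - {k}. \<bar>z j\<bar> * mu (2 ^ K - 1) 1 j) = - (\<Sum>j\<in>{1..K} - {k}. z j * mu (2 ^ K - 1) 1 j)"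
    unfolding sum_negf[symmetric] using zn by (intro sum.cong) auto
  then show "cosh (Xh K h (mu (bidx K h) m) (z(k := s))) * cosh (Xh K (one K) (mu (2 ^ K - 1) 1) (z(k := t)))
     \<le> cosh (Xh K h (mu (bidx K h) m) (z(k := t))) * cosh (Xh K (one K) (mu (2 ^ K - 1) 1) (z(k := s)))"
    unfolding HC1 HC2 using HC3 HC4 st by (intro core_neg) auto
qed

end

theorem theorem3:
  fixes K :: nat and M :: "nat \<Rightarrow> nat" and mu :: "nat \<Rightarrow> nat \<Rightarrow> nat \<Rightarrow> real"
    and p :: "nat \<Rightarrow> nat \<Rightarrow> real"
  assumes "K \<ge> 2"
    and "r_csmGmm K M mu p"
  shows "\<forall>k\<in>{1..K}. \<forall>z :: nat \<Rightarrow> real. \<forall>s t :: real.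
           ((\<forall>k'\<in>{1..K}. k' \<noteq> k \<longrightarrow> z k' > 0) \<and> 0 < s \<and> s \<le> t
              \<longrightarrow> lfdr K M mu p (z(k := t)) \<le> lfdr K M mu p (z(k := s))) \<and>
           ((\<forall>k'\<in>{1..K}. k' \<noteq> k \<longrightarrow> z k' < 0) \<and> s \<le> t \<and> t < 0
              \<longrightarrow> lfdr K M mu p (z(k := s)) \<le> lfdr K M mu p (z(k := t)))"
proof -
  have K1: "K \<ge> 1" using assms(1) by simp
  show ?thesis
    using main_pos[OF assms(2) K1] main_neg[OF assms(2) K1] by blast
qed

end
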